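(* For all integers $v\geq 1$ and $r\geq 1$, $$\sum_{i=1}^{2v-1}2^{i-1}\binom{2r+i-1}{i}\sigma(2v+1-i,2r+i)+2^{2v}\sum_{j=0}^{2r-2}(-1)^j\binom{2v+j}{j}\lambda(2v+1+j)\lambda(2r-j)$$ $$-2^{2v}\binom{2v+2r-1}{2v}(v+r)\lambda(2v+2r+1)+2^{2v}\binom{2v+2r-1}{2v}\sum_{j=1}^{r+v-1}\lambda(2j)\lambda(2r+2v-2j+1)=0.$$
   Context: For integers $t\geq 1$, $n\geq 1$ let $S_n^{(t)}=\sum_{k=1}^{n}\frac{1}{(2k-1)^t}$, and for integers $s\geq 2$, $t\geq 1$ let $\sigma(s,t)=\sum_{n\geq 1}\frac{S_n^{(t)}}{n^s}$. For real $s>1$, $\lambda(s)=\sum_{n\geq 1}\frac{1}{(2n-1)^s}$. *)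

theory Defs
  imports "HOL-Analysis.Analysis"
begin

definition oddHarm :: "nat \<Rightarrow> nat \<Rightarrow> real" where
  "oddHarm t n = (\<Sum>k=1..n. 1 / (2 * real k - 1) ^ t)"

definition sigmaOdd :: "nat \<Rightarrow> nat \<Rightarrow> real" where
  "sigmaOdd s t = (\<Sum>n. oddHarm t (Suc n) / real (Suc n) ^ s)"

definition lambdaDir :: "real \<Rightarrow> real" where
  "lambdaDir s = (\<Sum>n. 1 / (2 * real (Suc n) - 1) powr s)"

end

theory Submission
  imports Defs
begin

definition T1 :: "real \<Rightarrow> real \<Rightarrow> nat \<Rightarrow> nat \<Rightarrow> real" where
  "T1 x z B C = (\<Sum>i<C. real ((B+i-1) choose i) / (x^(B+i) * z^(C-i)))"
definition T2 :: "real \<Rightarrow> real \<Rightarrow> nat \<Rightarrow> nat \<Rightarrow> real" where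
  "T2 x y B C = (\<Sum>u<B. (-1)^u * real ((C-1+u) choose u) / (x^(C+u) * y^(B-u)))"

lemma T1_step:
  assumes "x \<noteq> 0" "z \<noteq> 0"
  shows "T1 x z (Suc B) (Suc C) = (T1 x z (Suc B) C + T1 x z B (Suc C)) / x"
proof -
  have a: "T1 x z (Suc B) (Suc C) = 1/(x^(Suc B) * z^(Suc C))
     + (\<Sum>i<C. real ((B+i+1) choose (Suc i)) / (x^(B+i+2) * z^(C-i)))"
    unfolding T1_def by (subst sum.lessThan_Suc_shift) (simp add: algebra_simps)
  have b: "T1 x z B (Suc C) = 1/(x^B * z^(Suc C))
     + (\<Sum>i<C. real ((B+i) choose (Suc i)) / (x^(B+i+1) * z^(C-i)))"
    unfolding T1_def by (subst sum.lessThan_Suc_shift) (simp add: algebra_simps)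
  have c: "T1 x z (Suc B) C = (\<Sum>i<C. real ((B+i) choose i) / (x^(B+i+1) * z^(C-i)))"
    unfolding T1_def by (simp add: algebra_simps)
  have d: "(\<Sum>i<C. real ((B+i+1) choose (Suc i)) / (x^(B+i+2) * z^(C-i)))
     = (\<Sum>i<C. (real ((B+i) choose i) / (x^(B+i+1) * z^(C-i)) + real ((B+i) choose (Suc i)) / (x^(B+i+1) * z^(C-i)))/x)"
  proof (rule sum.cong[OF refl])
    fix i assume "i \<in> {..<C}"
    have "(B+i+1) choose (Suc i) = ((B+i) choose i) + ((B+i) choose (Suc i))" by simp
    then show "real ((B+i+1) choose (Suc i)) / (x^(B+i+2) * z^(C-i))
     = (real ((B+i) choose i) / (x^(B+i+1) * z^(C-i)) + real ((B+i) choose (Suc i)) / (x^(B+i+1) * z^(C-i)))/x"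
      using assms by (simp add: field_simps)
  qed
  have f: "1/(x^(Suc B) * z^(Suc C)) = (1/(x^B * z^(Suc C)))/x" using assms by simp
  show ?thesis unfolding a b c d f
    by (simp add: sum.distrib sum_divide_distrib add_divide_distrib mult_ac)
qed

lemma T2_step:
  assumes "x \<noteq> 0" "y \<noteq> 0"
  shows "T2 x y (Suc B) (Suc (Suc c)) = (T2 x y (Suc B) (Suc c) - T2 x y B (Suc (Suc c))) / x"
proof -
  have a: "T2 x y (Suc B) (Suc (Suc c)) = 1/(x^(Suc (Suc c)) * y^(Suc B))
     + (\<Sum>u<B. (-1)^(Suc u) * real ((c+u+2) choose (Suc u)) / (x^(Suc (Suc (Suc (c+u)))) * y^(B-u)))"
    unfolding T2_def by (subst sum.lessThan_Suc_shift) (simp add: algebra_simps del: binomial_Suc_Suc)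
  have b: "T2 x y (Suc B) (Suc c) = 1/(x^(Suc c) * y^(Suc B))
     + (\<Sum>u<B. (-1)^(Suc u) * real ((c+u+1) choose (Suc u)) / (x^(Suc (Suc (c+u))) * y^(B-u)))"
    unfolding T2_def by (subst sum.lessThan_Suc_shift) (simp add: algebra_simps del: binomial_Suc_Suc)
  have c: "T2 x y B (Suc (Suc c)) = (\<Sum>u<B. (-1)^u * real ((c+u+1) choose u) / (x^(Suc (Suc (c+u))) * y^(B-u)))"
    unfolding T2_def by (simp add: algebra_simps del: binomial_Suc_Suc)
  have d: "(\<Sum>u<B. (-1)^(Suc u) * real ((c+u+2) choose (Suc u)) / (x^(Suc (Suc (Suc (c+u)))) * y^(B-u)))
      = (\<Sum>u<B. ((-1)^(Suc u) * real ((c+u+1) choose (Suc u)) / (x^(Suc (Suc (c+u))) * y^(B-u))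
          - (-1)^u * real ((c+u+1) choose u) / (x^(Suc (Suc (c+u))) * y^(B-u))) / x)"
  proof (rule sum.cong[OF refl])
    fix u assume "u \<in> {..<B}"
    have e: "(c+u+2) choose (Suc u) = ((c+u+1) choose u) + ((c+u+1) choose (Suc u))" by simp
    show "(-1)^(Suc u) * real ((c+u+2) choose (Suc u)) / (x^(Suc (Suc (Suc (c+u)))) * y^(B-u))
      = ((-1)^(Suc u) * real ((c+u+1) choose (Suc u)) / (x^(Suc (Suc (c+u))) * y^(B-u))
          - (-1)^u * real ((c+u+1) choose u) / (x^(Suc (Suc (c+u))) * y^(B-u))) / x"
      unfolding e using assms by (simp add: field_simps)
  qed
  have f: "1/(x^(Suc (Suc c)) * y^(Suc B)) = (1/(x^(Suc c) * y^(Suc B)))/x" using assms by simp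
  have g: "(\<Sum>j<B. (P j - Q j) / x) = ((\<Sum>j<B. P j) - (\<Sum>j<B. Q j)) / x" for P Q :: "nat \<Rightarrow> real"
    by (simp add: sum_subtractf sum_divide_distrib[symmetric])
  show ?thesis unfolding a b c d f g
    by (simp add: diff_divide_distrib add_divide_distrib)
qed

lemma aux_pf1:
  fixes a x y z :: real
  assumes "a \<noteq> 0" "x \<noteq> 0" "y \<noteq> 0" "z \<noteq> 0" "z = x + y"
  shows "1/(a*z)/y = 1/(x*a*y) - 1/(x*a*z)"
proof -
  have "1/(x*a*y) - 1/(x*a*z) = (z - y)/(x*a*y*z)" using assms(1-4) by (simp add: field_simps)
  also have "(z - y)/(x*a*y*z) = x/(x*a*y*z)" using assms(5) by simp
  also have "x/(x*a*y*z) = 1/(a*z)/y" using assms(1-4) by (simp add: field_simps)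
  finally show ?thesis by simp
qed

lemma aux_pf2:
  fixes p q x y z :: real
  assumes "p \<noteq> 0" "q \<noteq> 0" "x \<noteq> 0" "y \<noteq> 0" "z \<noteq> 0" "z = x + y"
  shows "1/(y*p*(z*q)) = (1/(y*p*q) - 1/(p*(z*q)))/x"
proof -
  have "(1/(y*p*q) - 1/(p*(z*q)))/x = ((z - y)/(y*p*(z*q)))/x" using assms(1-5) by (simp add: field_simps)
  also have "(z - y)/(y*p*(z*q)) = x/(y*p*(z*q))" using assms(6) by simp
  also have "x/(y*p*(z*q))/x = 1/(y*p*(z*q))" using assms(1-5) by simp
  finally show ?thesis by simp
qed

lemma pf_base:
  assumes "x > 0" "y > 0"
  shows "1/(y^B * (x+y)) = (-1)^B * T1 x (x+y) B 1 + T2 x y B 1"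
proof (induction B)
  case 0
  then show ?case by (simp add: T1_def T2_def)
next
  case (Suc B)
  have z: "x + y \<noteq> 0" using assms by simp
  have t1: "T1 x (x+y) B' 1 = 1/(x^B' * (x+y))" for B' by (simp add: T1_def)
  have t2: "T2 x y (Suc B) 1 = (\<Sum>u<B. (-1)^u / (x^(Suc u) * y^(B-u)))/y + (-1)^B/(x^(Suc B) * y)"
  proof -
    have "T2 x y (Suc B) 1 = (\<Sum>u<B. (-1)^u / (x^(Suc u) * y^(Suc B-u))) + (-1)^B/(x^(Suc B) * y)"
      by (simp add: T2_def)
    also have "(\<Sum>u<B. (-1)^u / (x^(Suc u) * y^(Suc B-u))) = (\<Sum>u<B. (-1)^u / (x^(Suc u) * y^(B-u)))/y"
      unfolding sum_divide_distrib
      by (rule sum.cong) (auto simp: Suc_diff_le)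
    finally show ?thesis .
  qed
  have "1/(y^Suc B * (x+y)) = (1/(y^B * (x+y)))/y" by simp
  also have "\<dots> = ((-1)^B/(x^B*(x+y)) + (\<Sum>u<B. (-1)^u / (x^(Suc u) * y^(B-u))))/y"
    using Suc.IH unfolding t1 by (simp add: T2_def)
  also have "\<dots> = (-1)^B * (1/(x^B*(x+y))/y) + (\<Sum>u<B. (-1)^u / (x^(Suc u) * y^(B-u)))/y"
    by (simp add: add_divide_distrib)
  also have "1/(x^B*(x+y))/y = 1/(x^Suc B*y) - 1/(x^Suc B*(x+y))"
    using aux_pf1[of "x^B" x y "x+y"] assms z by (simp add: mult_ac)
  also have "(-1)^B * (1/(x^Suc B*y) - 1/(x^Suc B*(x+y))) + (\<Sum>u<B. (-1)^u / (x^(Suc u) * y^(B-u)))/y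
     = (-1)^Suc B * (1/(x^Suc B * (x+y))) + T2 x y (Suc B) 1"
    unfolding t2 by (simp add: algebra_simps)
  finally show ?case unfolding t1 .
qed

lemma pf_gen:
  assumes "x > 0" "y > 0"
  shows "1/(y^B * (x+y)^(Suc c)) = (-1)^B * T1 x (x+y) B (Suc c) + T2 x y B (Suc c)"
proof (induction c arbitrary: B)
  case 0
  then show ?case using pf_base[OF assms] by simp
next
  case (Suc c)
  note IHc = Suc.IH
  have z: "x + y \<noteq> 0" using assms by simp
  show ?case
  proof (induction B)
    case 0
    then show ?case by (simp add: T1_def T2_def sum.lessThan_Suc_shift binomial_eq_0 del: sum.lessThan_Suc)
  next
    case (Suc B)
    have "1/(y^Suc B * (x+y)^(Suc (Suc c))) = (1/(y^Suc B * (x+y)^(Suc c)) - 1/(y^B * (x+y)^(Suc (Suc c))))/x"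
      using aux_pf2[where p="y^B" and q="(x+y)^Suc c" and x=x and y=y and z="x+y"] assms z by (simp add: mult_ac)
    also have "\<dots> = (((-1)^Suc B * T1 x (x+y) (Suc B) (Suc c) + T2 x y (Suc B) (Suc c))
       - ((-1)^B * T1 x (x+y) B (Suc (Suc c)) + T2 x y B (Suc (Suc c))))/x"
      using IHc[of "Suc B"] Suc.IH by simp
    also have "\<dots> = (-1)^Suc B * T1 x (x+y) (Suc B) (Suc (Suc c)) + T2 x y (Suc B) (Suc (Suc c))"
      using assms z by (simp add: T1_step T2_step diff_divide_distrib add_divide_distrib algebra_simps)
    finally show ?case .
  qed
qed


definition od :: "nat \<Rightarrow> real" where "od k = 2*real k + 1"

lemma od_pos[simp]: "od k > 0" and od_ge1[simp]: "od k \<ge> 1" and od_nz[simp]: "od k \<noteq> 0"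
  by (auto simp: od_def)

lemma od_pow_pos[simp]: "od k ^ n > 0" and od_pow_nn[simp]: "od k ^ n \<ge> 0" and od_nn[simp]: "od k \<ge> 0"
  and od_pow_abs[simp]: "\<bar>od k ^ n\<bar> = od k ^ n" and od_abs[simp]: "\<bar>od k\<bar> = od k"
  using od_pos[of k] by (auto simp del: od_pos)

definition L :: "nat \<Rightarrow> real" where "L n = (\<Sum>k. 1/od k^n)"

lemma summable_inv_sq: "summable (\<lambda>k. 1/(real k + 1)^2)"
proof -
  have "summable (\<lambda>n. inverse (real n ^ 2))" by (rule inverse_power_summable) simp
  then have "summable (\<lambda>n. inverse (real (Suc n) ^ 2))" by (subst summable_Suc_iff)
  then show ?thesis by (simp add: field_simps)
qed

lemma summable_on_inv_sq: "(\<lambda>k. 1/(real k + 1)^2) summable_on UNIV"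
  using summable_inv_sq by (subst summable_on_UNIV_nonneg_real_iff) auto

lemma odd_pow_bound: "n \<ge> 2 \<Longrightarrow> 1/od k^n \<le> 1/(real k + 1)^2"
proof -
  assume n: "n \<ge> 2"
  have "(real k + 1)^2 \<le> (real k + 1)^n" by (rule power_increasing) (use n in auto)
  also have "\<dots> \<le> od k^n" by (rule power_mono) (auto simp: od_def)
  finally show ?thesis by (intro divide_left_mono) (auto intro!: mult_pos_pos)
qed

lemma L_summable: "n \<ge> 2 \<Longrightarrow> summable (\<lambda>k. 1/od k^n)"
  by (rule summable_comparison_test[OF _ summable_inv_sq]) (auto intro!: exI[of _ 0] odd_pow_bound)

lemma L_has_sum: "n \<ge> 2 \<Longrightarrow> ((\<lambda>k. 1/od k^n) has_sum L n) UNIV"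
  unfolding L_def by (rule sums_nonneg_imp_has_sum) (auto intro: summable_sums L_summable)

lemma L_nonneg: "n \<ge> 2 \<Longrightarrow> L n \<ge> 0"
  unfolding L_def by (auto intro!: suminf_nonneg L_summable)

lemma lambdaDir_L: "lambdaDir (real n) = L n"
proof -
  have "(\<lambda>k. 1 / (2 * real (Suc k) - 1) powr real n) = (\<lambda>k. 1/od k^n)"
  proof
    fix k
    have "2 * real (Suc k) - 1 = od k" by (simp add: od_def)
    moreover have "od k powr real n = od k^n" by (rule powr_realpow) auto
    ultimately show "1 / (2 * real (Suc k) - 1) powr real n = 1/od k^n" by simp
  qed
  then show ?thesis unfolding lambdaDir_def L_def by simp
qed

lemma has_sum_prod_nonneg:
  fixes f g :: "nat \<Rightarrow> real"
  assumes "(f has_sum A) UNIV" "(g has_sum B) UNIV" "\<And>k. f k \<ge> 0" "\<And>l. g l \<ge> 0"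
  shows "((\<lambda>(k,l). f k * g l) has_sum (A*B)) UNIV"
proof -
  have inner: "((\<lambda>l. (\<lambda>(k,l). f k * g l) (k, l)) has_sum f k * B) UNIV" for k
    using has_sum_cmult_right[OF assms(2), of "f k"] by simp
  have outer: "((\<lambda>k. f k * B) has_sum A * B) UNIV"
    using has_sum_cmult_left[OF assms(1), of B] by simp
  have summ: "(\<lambda>(k,l). f k * g l) summable_on Sigma UNIV (\<lambda>_. UNIV)"
    by (rule summable_on_SigmaI[OF inner]) (use outer assms in \<open>auto simp: summable_on_def\<close>)
  have "((\<lambda>(k,l). f k * g l) has_sum (A*B)) (Sigma UNIV (\<lambda>_. UNIV))"
    by (rule has_sum_SigmaI[OF inner outer summ])
  then show ?thesis by simp
qed

lemma summable_on_prod_nonneg: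
  fixes f g :: "nat \<Rightarrow> real"
  assumes "f summable_on UNIV" "g summable_on UNIV" "\<And>k. f k \<ge> 0" "\<And>l. g l \<ge> 0"
  shows "(\<lambda>(k,l). f k * g l) summable_on UNIV"
  using has_sum_prod_nonneg[of f _ g] assms unfolding summable_on_def by blast

lemma summable_on_by_bound:
  fixes h :: "nat \<times> nat \<Rightarrow> real"
  assumes "\<And>k l. \<bar>h (k,l)\<bar> \<le> c * (1/(real k + 1)^2) * (1/(real l + 1)^2)"
  shows "h summable_on UNIV"
proof -
  have s: "(\<lambda>(k,l). (1/(real k + 1)^2) * (1/(real l + 1)^2)) summable_on UNIV"
    by (rule summable_on_prod_nonneg) (auto intro: summable_on_inv_sq)
  have "(\<lambda>p. c * (\<lambda>(k,l). (1/(real k + 1)^2) * (1/(real l + 1)^2)) p) summable_on UNIV"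
    by (rule summable_on_cmult_right[OF s])
  moreover have "norm (h p) \<le> c * (\<lambda>(k,l). (1/(real k + 1)^2) * (1/(real l + 1)^2)) p" for p
    using assms[of "fst p" "snd p"] by (cases p) (simp add: mult.assoc)
  ultimately have "(\<lambda>p. norm (h p)) summable_on UNIV"
    by (rule summable_on_comparison_test) auto
  then show ?thesis using summable_on_iff_abs_summable_on_real by blast
qed

lemma oddHarm_Suc: "oddHarm t (Suc n) = (\<Sum>k\<le>n. 1/od k^t)"
proof -
  have "oddHarm t (Suc n) = (\<Sum>k=Suc 0..Suc n. 1 / (2 * real k - 1) ^ t)" by (simp add: oddHarm_def)
  also have "\<dots> = (\<Sum>k=0..n. 1 / (2 * real (Suc k) - 1) ^ t)" by (rule sum.shift_bounds_cl_Suc_ivl)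
  also have "\<dots> = (\<Sum>k\<le>n. 1/od k^t)" unfolding od_def by (simp add: atLeast0AtMost add.commute)
  finally show ?thesis .
qed

lemma oddHarm_nonneg: "oddHarm t (Suc n) \<ge> 0"
  unfolding oddHarm_Suc by (auto intro!: sum_nonneg)

lemma sigma_has_sum:
  assumes s: "s \<ge> 2" and t: "t \<ge> 2"
  shows "((\<lambda>(k,l). 1/(od k^t * (real (k+l)+1)^s)) has_sum sigmaOdd s t) UNIV"
proof -
  define g where "g = (\<lambda>(n,k). 1/(od k^t * (real n+1)^s))"
  have inner: "((\<lambda>k. g (n,k)) has_sum oddHarm t (Suc n) / real (Suc n)^s) {..n}" for n
    by (rule has_sum_finiteI) (auto simp: g_def oddHarm_Suc sum_divide_distrib add.commute)
  have bnd: "oddHarm t (Suc n) / real (Suc n)^s \<le> L t * (1/(real n+1)^2)" for n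
  proof -
    have "oddHarm t (Suc n) \<le> L t" unfolding oddHarm_Suc L_def
      by (auto intro!: sum_le_suminf L_summable t)
    moreover have "(real n + 1)^2 \<le> real (Suc n)^s" by (simp add: add.commute power_increasing s)
    moreover have "oddHarm t (Suc n) \<ge> 0" unfolding oddHarm_Suc by (auto intro!: sum_nonneg)
    ultimately have "oddHarm t (Suc n) / real (Suc n)^s \<le> L t / (real n + 1)^2"
      by (intro frac_le) auto
    then show ?thesis by simp
  qed
  have nn: "oddHarm t (Suc n) / real (Suc n)^s \<ge> 0" for n
    using oddHarm_nonneg by simp
  have summ1: "summable (\<lambda>n. oddHarm t (Suc n) / real (Suc n)^s)"
    by (rule summable_comparison_test[OF _ summable_mult[OF summable_inv_sq, of "L t"]])
       (use bnd nn oddHarm_nonneg in auto)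
  have outer: "((\<lambda>n. oddHarm t (Suc n) / real (Suc n)^s) has_sum sigmaOdd s t) UNIV"
    unfolding sigmaOdd_def by (rule sums_nonneg_imp_has_sum) (use summ1 nn in \<open>auto intro: summable_sums\<close>)
  have summ: "g summable_on Sigma UNIV (\<lambda>n. {..n})"
    by (rule summable_on_SigmaI[OF inner]) (use outer in \<open>auto simp: summable_on_def g_def\<close>)
  have hs: "(g has_sum sigmaOdd s t) (Sigma UNIV (\<lambda>n. {..n}))"
    by (rule has_sum_SigmaI[OF inner outer summ])
  show ?thesis
    by (rule has_sum_reindex_bij_witness[where j="\<lambda>(k,l). (k+l,k)" and i="\<lambda>(n,k). (k,n-k)", THEN iffD2, OF _ _ _ _ _ refl hs])
       (auto simp: g_def)
qed


definition aa :: "nat \<Rightarrow> nat \<Rightarrow> real" where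
  "aa k l = (if l = k then 0 else 1/(2*(real l - real k))) - 1/(2*(real l + real k + 1))"

definition PP :: "nat \<Rightarrow> nat \<Rightarrow> real" where
  "PP k N = (if N \<le> k then (harm (k-N) - harm (k+N))/2 else (harm (N-1-k) - harm (N+k))/2)"

lemma harm_Suc': "harm (Suc n) = harm n + 1/real (Suc n)"
  by (simp add: harm_Suc divide_inverse)

lemma aa_partial: "(\<Sum>l<N. aa k l) = PP k N"
proof (induction N)
  case 0
  then show ?case by (simp add: PP_def)
next
  case (Suc N)
  have "(\<Sum>l<Suc N. aa k l) = PP k N + aa k N" using Suc by simp
  also have "\<dots> = PP k (Suc N)"
  proof (cases "N < k")
    case True
    obtain d where k: "k = Suc (N + d)" using less_imp_Suc_add[OF True] by blast
    have p1: "PP k N = (harm (Suc d) - harm (k+N))/2" using k unfolding PP_def by simp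
    have p2: "PP k (Suc N) = (harm d - harm (Suc (k+N)))/2" using k unfolding PP_def by simp
    have a: "aa k N = 1/(2*(real N - real k)) - 1/(2*(real N + real k + 1))"
      using True unfolding aa_def by simp
    have e: "2*(real N - real k) = -(2*real (Suc d))" using k by simp
    have g: "1/(-(2*x)) = -(1/x)/(2::real)" for x by simp
    have h3: "1/(2*(real N - real k)) = -(1/real(Suc d))/2" unfolding e by (rule g)
    have h4: "1/(2*(real N + real k + 1)) = (1/real (Suc (k+N)))/2" by (simp add: add.commute)
    have g2: "(A + u - B)/2 + (-u/2 - w/2) = (A - (B + w))/(2::real)" for A u B w by (simp add: field_simps)
    show ?thesis unfolding p1 p2 a h3 h4 harm_Suc'[of d] harm_Suc'[of "k+N"] by (rule g2)
  next
    case False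
    show ?thesis
    proof (cases "N = k")
      case True
      have p1: "PP k N = (harm 0 - harm (k+N))/2" using True unfolding PP_def by simp
      have p2: "PP k (Suc N) = (harm 0 - harm (Suc (k+N)))/2" using True unfolding PP_def by simp
      have a: "aa k N = - 1/(2*(real N + real k + 1))"
        using True unfolding aa_def by simp
      have h4: "1/(2*(real N + real k + 1)) = (1/real (Suc (k+N)))/2" by (simp add: add.commute)
      have g2: "(A - B)/2 + -(w/2) = (A - (B + w))/(2::real)" for A B w by (simp add: field_simps)
      show ?thesis unfolding p1 p2 a minus_divide_left[symmetric] h4 harm_Suc'[of "k+N"] by (rule g2)
    next
      case False2: False
      have "k < N" using False False2 by simp
      then obtain d where N: "N = Suc (k + d)" using less_imp_Suc_add by blast
      have p1: "PP k N = (harm d - harm (N+k))/2" using N unfolding PP_def by simp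
      have p2: "PP k (Suc N) = (harm (Suc d) - harm (Suc (N+k)))/2" using N unfolding PP_def by simp
      have a: "aa k N = 1/(2*(real N - real k)) - 1/(2*(real N + real k + 1))"
        using False2 unfolding aa_def by simp
      have e: "2*(real N - real k) = 2*real (Suc d)" using N by simp
      have g: "1/((2*x)) = (1/x)/(2::real)" for x by simp
      have h3: "1/(2*(real N - real k)) = (1/real(Suc d))/2" unfolding e by (rule g)
      have h4: "1/(2*(real N + real k + 1)) = (1/real (Suc (N+k)))/2" by simp
      have g2: "(A - B)/2 + (u/2 - w/2) = (A + u - (B + w))/(2::real)" for A B u w by (simp add: field_simps)
      show ?thesis unfolding p1 p2 a h3 h4 harm_Suc'[of d] harm_Suc'[of "N+k"] by (rule g2)
    qed
  qed
  finally show ?case .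
qed

lemma harm_diff_le: "harm (a + c) - harm a \<le> real c / (real a + 1)"
proof (induction c)
  case 0
  then show ?case by simp
next
  case (Suc c)
  have "harm (a + Suc c) - harm a = (harm (a + c) - harm a) + 1/(real (a+c) + 1)"
    by (simp add: harm_Suc field_simps)
  also have "1/(real (a+c) + 1) \<le> 1/(real a + 1)" by (intro divide_left_mono) auto
  finally show ?case using Suc by (simp add: add_divide_distrib)
qed

lemma PP_tendsto: "PP k \<longlonglongrightarrow> 0"
proof (rule LIMSEQ_offset[where k="Suc k"])
  show "(\<lambda>d. PP k (d + Suc k)) \<longlonglongrightarrow> 0"
  proof (rule tendsto_sandwich[where f="\<lambda>d. - (real (2*k+1)/2) * inverse (real (Suc d))" and h="\<lambda>N. 0"])
    show "\<forall>\<^sub>F d in sequentially. - (real (2*k+1)/2) * inverse (real (Suc d)) \<le> PP k (d + Suc k)"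
    proof (rule always_eventually, rule allI)
      fix d
      have e: "d + Suc k + k = d + (2*k+1)" "d + Suc k - 1 - k = d" by simp_all
      have "harm (d + Suc k + k) - harm (d + Suc k - 1 - k) = harm (d + (2*k+1)) - harm d"
        by (subst e(1), subst e(2), rule refl)
      also have "\<dots> \<le> real (2*k+1) / (real d + 1)" by (rule harm_diff_le)
      finally have i: "harm (d + Suc k + k) - harm (d + Suc k - 1 - k) \<le> real (2*k+1) / (real d + 1)" .
      have p: "PP k (d + Suc k) = (harm (d + Suc k - 1 - k) - harm (d + Suc k + k))/2"
        unfolding PP_def by simp
      have q: "- (real (2*k+1)/2) * inverse (real (Suc d)) = - ((real (2*k+1) / (real d + 1))/2)"
        by (simp add: inverse_eq_divide add.commute)
      have aux: "(a::real) - b \<le> c \<Longrightarrow> -(c/2) \<le> (b - a)/2" for a b c by argo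
      show "- (real (2*k+1)/2) * inverse (real (Suc d)) \<le> PP k (d + Suc k)"
        unfolding p q by (rule aux[OF i])
    qed
    show "\<forall>\<^sub>F d in sequentially. PP k (d + Suc k) \<le> 0"
    proof (rule always_eventually, rule allI)
      fix d
      have "harm (d + Suc k - 1 - k) \<le> (harm (d + Suc k + k) :: real)" by (rule harm_mono) simp
      then show "PP k (d + Suc k) \<le> 0" unfolding PP_def by simp
    qed
    show "(\<lambda>d. - (real (2*k+1)/2) * inverse (real (Suc d))) \<longlonglongrightarrow> 0"
      by (rule tendsto_mult_right_zero[OF LIMSEQ_inverse_real_of_nat])
    show "(\<lambda>N. 0::real) \<longlonglongrightarrow> 0" by simp
  qed
qed

lemma aa_sums: "aa k sums 0"
  unfolding sums_def aa_partial using PP_tendsto .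


definition Ff :: "nat \<Rightarrow> nat \<times> nat \<Rightarrow> real" where
  "Ff n p = 1/(od (fst p)^n * od (snd p) * (od (fst p) + od (snd p)))"
definition Qf :: "nat \<Rightarrow> nat \<times> nat \<Rightarrow> real" where
  "Qf n p = (if fst p = snd p then 0 else 1/(od (fst p)^n * od (snd p) * (od (snd p) - od (fst p))))"

lemma od_sq_bound: "1/(real k + 1)^2 \<ge> 1/od k^2"
  by (intro divide_left_mono power_mono) (auto simp: od_def)

lemma od_diff: "od l - od k = 2*(real l - real k)" and od_sum: "od k + od l = 2*(real l + real k + 1)"
  by (auto simp: od_def)

lemma od_diff_abs: "k \<noteq> l \<Longrightarrow> \<bar>od l - od k\<bar> \<ge> 2"
  unfolding od_diff by (cases "k < l") auto

lemma Ff_bound: assumes "n \<ge> 2" shows "\<bar>Ff n (k,l)\<bar> \<le> 1 * (1/(real k + 1)^2) * (1/(real l + 1)^2)"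
proof -
  have "od k^2 \<le> od k^n" by (rule power_increasing) (use assms in auto)
  moreover have "od l^2 \<le> od l * (od k + od l)" by (simp add: power2_eq_square)
  ultimately have "od k^2 * od l^2 \<le> od k^n * (od l * (od k + od l))"
    by (intro mult_mono) auto
  then have "1/(od k^n * od l * (od k + od l)) \<le> 1/(od k^2 * od l^2)"
    by (intro divide_left_mono) (auto simp: mult.assoc intro!: mult_pos_pos add_pos_pos)
  also have "\<dots> = (1/od k^2) * (1/od l^2)" by simp
  also have "\<dots> \<le> (1/(real k + 1)^2) * (1/(real l + 1)^2)"
    by (intro mult_mono od_sq_bound) auto
  finally show ?thesis unfolding Ff_def by (simp add: abs_of_pos)
qed

lemma q_ineq:
  fixes x y :: real
  assumes x: "x \<ge> 1" and y: "y > 0" and d: "\<bar>y - x\<bar> \<ge> 2"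
  shows "y \<le> 2*x*\<bar>y - x\<bar>"
proof (cases "y \<le> 2*x")
  case True
  have "2*x*2 \<le> 2*x*\<bar>y - x\<bar>" by (rule mult_left_mono) (use d x in auto)
  then show ?thesis using True x by linarith
next
  case False
  then have "\<bar>y - x\<bar> = y - x" using x by auto
  moreover have "2*1*(y-x) \<le> 2*x*(y-x)" by (intro mult_right_mono) (use x False in auto)
  ultimately show ?thesis using False by auto
qed

lemma Qf_bound: assumes "n \<ge> 3" shows "\<bar>Qf n (k,l)\<bar> \<le> 2 * (1/(real k + 1)^2) * (1/(real l + 1)^2)"
proof (cases "k = l")
  case True
  then show ?thesis by (simp add: Qf_def)
next
  case False
  define x where "x = od k"
  define y where "y = od l"
  have x1: "x \<ge> 1" and y0: "y > 0" and x0: "x > 0" unfolding x_def y_def by auto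
  have d: "\<bar>y - x\<bar> \<ge> 2" unfolding x_def y_def using od_diff_abs False by auto
  have h: "y \<le> 2*x*\<bar>y - x\<bar>" by (rule q_ineq[OF x1 y0 d])
  have "x^2 * y^2 = (x^2 * y) * y" by (simp add: power2_eq_square)
  also have "\<dots> \<le> (x^2 * y) * (2*x*\<bar>y - x\<bar>)" by (rule mult_left_mono[OF h]) (use y0 in auto)
  also have "\<dots> = 2 * (x^3 * y * \<bar>y - x\<bar>)" by (simp add: power2_eq_square power3_eq_cube)
  also have "x^3 \<le> x^n" by (rule power_increasing) (use assms x1 in auto)
  then have "2 * (x^3 * y * \<bar>y - x\<bar>) \<le> 2 * (x^n * y * \<bar>y - x\<bar>)"
    using y0 by (intro mult_left_mono mult_right_mono) auto
  finally have main: "x^2 * y^2 \<le> 2 * (x^n * y * \<bar>y - x\<bar>)" .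
  have pos: "0 < x^2 * y^2" using x0 y0 by auto
  have "\<bar>Qf n (k,l)\<bar> = 1/(x^n * y * \<bar>y - x\<bar>)"
    using False unfolding Qf_def x_def y_def by (simp add: abs_mult abs_of_pos)
  also have "\<dots> \<le> 2 / (x^2 * y^2)"
  proof -
    have "0 < x^n * y * \<bar>y - x\<bar>" using x0 y0 d by auto
    then show ?thesis using main pos by (simp add: field_simps)
  qed
  also have "\<dots> = 2 * (1/x^2) * (1/y^2)" by simp
  also have "\<dots> \<le> 2 * (1/(real k + 1)^2) * (1/(real l + 1)^2)"
    unfolding x_def y_def by (intro mult_mono od_sq_bound mult_left_mono) auto
  finally show ?thesis .
qed

lemma Ff_summable: "n \<ge> 2 \<Longrightarrow> Ff n summable_on UNIV"
  by (rule summable_on_by_bound[of _ 1]) (rule Ff_bound)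

lemma Qf_summable: "n \<ge> 3 \<Longrightarrow> Qf n summable_on UNIV"
  by (rule summable_on_by_bound[of _ 2]) (rule Qf_bound)


lemma aux_FQ:
  fixes p x y u w :: real
  assumes "p \<noteq> 0" "x \<noteq> 0" "y \<noteq> 0" "u \<noteq> 0" "w \<noteq> 0" "u = x + y" "w = y - x"
  shows "1/(p*y*u) + 1/(p*y*w) = (1/(x*p))*(1/w - 1/u)"
proof -
  have "1/(p*y*u) + 1/(p*y*w) = (w+u)/(p*y*u*w)" using assms(1-5) by (simp add: field_simps)
  also have "w + u = 2*y" using assms(6,7) by simp
  also have "(2*y)/(p*y*u*w) = 2/(p*u*w)" using assms(1-5) by simp
  also have "2/(p*u*w) = (2*x)/(x*p*w*u)" using assms(1-5) by (simp add: field_simps)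
  also have "2*x = u - w" using assms(6,7) by simp
  also have "(u - w)/(x*p*w*u) = (1/(x*p))*(1/w - 1/u)" using assms(1-5) by (simp add: field_simps)
  finally show ?thesis .
qed

lemma FQ_point: "Ff n (k,l) + Qf n (k,l) = (1/od k^(Suc n)) * ((if l = k then 1/od k else 0) + aa k l)"
proof (cases "l = k")
  case True
  have "aa k k = - (1/(2* od k))" unfolding aa_def od_def by simp
  moreover have "Ff n (k,k) = 1/(od k^n * od k * (od k + od k))" unfolding Ff_def by simp
  moreover have g: "1/(p*x*(x+x)) = (1/(x*p))*(1/x + -(1/(2*x)))" if "x \<noteq> 0" "p \<noteq> 0" for x p :: real
    using that by (simp add: field_simps)
  ultimately show ?thesis using True g[of "od k" "od k^n"] by (simp add: Qf_def)
next
  case False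
  have a: "aa k l = 1/(od l - od k) - 1/(od k + od l)"
    using False unfolding aa_def od_diff od_sum by simp
  have nz: "od l - od k \<noteq> 0" using od_diff_abs[OF False[symmetric]] by auto
  have "Ff n (k,l) + Qf n (k,l) = 1/(od k^n * od l * (od k + od l)) + 1/(od k^n * od l * (od l - od k))"
    using False unfolding Ff_def Qf_def by simp
  also have "\<dots> = (1/(od k * od k^n)) * (1/(od l - od k) - 1/(od k + od l))"
    proof (rule aux_FQ)
    have "od k + od l > 0" by (rule add_pos_pos) auto
    then show "od k + od l \<noteq> 0" by simp
  qed (use nz in auto)
  finally show ?thesis using False a by simp
qed

lemma FQ_inner: "((\<lambda>l. Ff n (k,l) + Qf n (k,l)) sums (1/od k^(Suc n+1)))"
proof -
  have s1: "(\<lambda>l. (if l = k then 1/od k else 0)) sums (1/od k)"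
    using sums_single[of k "\<lambda>_. 1/od k"] by simp
  have "(\<lambda>l. (1/od k^(Suc n)) * ((if l = k then 1/od k else 0) + aa k l)) sums ((1/od k^(Suc n)) * (1/od k + 0))"
    by (intro sums_mult sums_add s1 aa_sums)
  moreover have "(1/od k^(Suc n)) * (1/od k + 0) = 1/od k^(Suc n+1)" by simp
  ultimately show ?thesis unfolding FQ_point by (simp add: mult_ac)
qed

lemma FQ_sum:
  assumes n: "n \<ge> 3"
  shows "infsum (Ff n) UNIV + infsum (Qf n) UNIV = L (n+2)"
proof -
  have hF: "(Ff n has_sum infsum (Ff n) UNIV) UNIV" using Ff_summable n by auto
  have hQ: "(Qf n has_sum infsum (Qf n) UNIV) UNIV" using Qf_summable n by auto
  have h: "((\<lambda>p. Ff n p + Qf n p) has_sum (infsum (Ff n) UNIV + infsum (Qf n) UNIV)) (Sigma UNIV (\<lambda>_. UNIV))"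
    using has_sum_add[OF hF hQ] by simp
  have summ: "(\<lambda>(k,l). Ff n (k,l) + Qf n (k,l)) summable_on Sigma UNIV (\<lambda>_. UNIV)"
  proof -
    have eq: "(\<lambda>(k,l). Ff n (k,l) + Qf n (k,l)) = (\<lambda>p. Ff n p + Qf n p)" by auto
    show ?thesis unfolding eq using h unfolding summable_on_def by blast
  qed
  have inner: "((\<lambda>l. Ff n (k,l) + Qf n (k,l)) has_sum (1/od k^(n+2))) UNIV" for k
  proof -
    have "(\<lambda>l. Ff n (k,l) + Qf n (k,l)) summable_on UNIV"
      using summable_on_SigmaD1[OF summ, of k] by simp
    then have "((\<lambda>l. Ff n (k,l) + Qf n (k,l)) has_sum infsum (\<lambda>l. Ff n (k,l) + Qf n (k,l)) UNIV) UNIV" by auto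
    moreover have "infsum (\<lambda>l. Ff n (k,l) + Qf n (k,l)) UNIV = 1/od k^(n+2)"
      using has_sum_imp_sums[OF calculation] FQ_inner[of n k] sums_unique2 by simp
    ultimately show ?thesis by simp
  qed
  have "((\<lambda>k. 1/od k^(n+2)) has_sum (infsum (Ff n) UNIV + infsum (Qf n) UNIV)) UNIV"
    by (rule has_sum_SigmaD[OF h]) (use inner in auto)
  with L_has_sum[of "n+2"] show ?thesis using has_sum_unique by auto
qed


lemma has_sum_diff':
  fixes f g :: "'a \<Rightarrow> real"
  assumes "(f has_sum a) A" "(g has_sum b) A"
  shows "((\<lambda>x. f x - g x) has_sum (a - b)) A"
proof -
  have "((\<lambda>x. - g x) has_sum (- b)) A" using assms(2) by (simp add: has_sum_uminus)
  from has_sum_add[OF assms(1) this] show ?thesis by simp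
qed

lemma has_sum_sum':
  fixes f :: "nat \<Rightarrow> 'a \<Rightarrow> real"
  assumes "\<And>j. j < m \<Longrightarrow> (f j has_sum s j) A"
  shows "((\<lambda>x. \<Sum>j<m. f j x) has_sum (\<Sum>j<m. s j)) A"
  using assms
proof (induction m)
  case 0
  then show ?case by simp
next
  case (Suc m)
  have "((\<lambda>x. (\<Sum>j<m. f j x) + f m x) has_sum ((\<Sum>j<m. s j) + s m)) A"
    by (rule has_sum_add) (use Suc in auto)
  then show ?case by simp
qed

lemma aux_G:
  fixes x y q w :: real
  assumes "x \<noteq> 0" "y \<noteq> 0" "q \<noteq> 0" "w \<noteq> 0" "w = y - x"
  shows "(1/x)*(1/(q*w)) = 1/(y*q*x) + 1/(y*q*w)"
proof -
  have "1/(y*q*x) + 1/(y*q*w) = (w + x)/(y*q*x*w)" using assms(1-4) by (simp add: field_simps)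
  also have "w + x = y" using assms(5) by simp
  also have "y/(y*q*x*w) = (1/x)*(1/(q*w))" using assms(1-4) by (simp add: field_simps)
  finally show ?thesis by simp
qed

lemma G_id:
  fixes x y :: real
  assumes "x \<noteq> 0" "y \<noteq> 0" "x \<noteq> y"
  shows "1/(x^n*(y-x)) = (\<Sum>i<n. 1/(y^(n-i)*x^(i+1))) + 1/(y^n*(y-x))"
proof (induction n)
  case 0
  then show ?case by simp
next
  case (Suc n)
  have w: "y - x \<noteq> 0" using assms by simp
  have "1/(x^Suc n*(y-x)) = (1/x)*(1/(x^n*(y-x)))" by simp
  also have "\<dots> = (1/x)*(\<Sum>i<n. 1/(y^(n-i)*x^(i+1))) + (1/x)*(1/(y^n*(y-x)))"
    unfolding Suc by (simp add: distrib_left)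
  also have "(1/x)*(1/(y^n*(y-x))) = 1/(y*y^n*x) + 1/(y*y^n*(y-x))"
    by (rule aux_G) (use assms w in auto)
  also have "(1/x)*(\<Sum>i<n. 1/(y^(n-i)*x^(i+1))) = (\<Sum>i<n. 1/(y^(Suc n - Suc i)*x^(Suc i+1)))"
    by (simp add: sum_distrib_left mult_ac)
  finally show ?case
    by (simp add: sum.lessThan_Suc_shift del: sum.lessThan_Suc)
qed

lemma Q_decomp_real:
  fixes x y :: real
  assumes "x \<noteq> 0" "y \<noteq> 0" "x \<noteq> y"
  shows "1/(x^(Suc m)*y*(y-x)) = (\<Sum>j<m. 1/(y^(Suc m-j)*x^(j+2))) - 1/(y^(Suc m)*x*(x-y))"
proof -
  have w: "y - x \<noteq> 0" "x - y \<noteq> 0" using assms by auto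
  have "1/(x^(Suc m)*y*(y-x)) = (1/y) * (1/(x^(Suc m)*(y-x)))" by simp
  also have "\<dots> = (1/y) * ((\<Sum>i<Suc m. 1/(y^(Suc m-i)*x^(i+1))) + 1/(y^(Suc m)*(y-x)))"
    by (subst G_id[OF assms]) (rule refl)
  also have "\<dots> = (1/y) * (1/(y^(Suc m)*x)) + (1/y) * (\<Sum>i<m. 1/(y^(m-i)*x^(i+2))) + (1/y)*(1/(y^(Suc m)*(y-x)))"
    by (simp add: sum.lessThan_Suc_shift distrib_left del: sum.lessThan_Suc)
  also have "(1/y) * (\<Sum>i<m. 1/(y^(m-i)*x^(i+2))) = (\<Sum>j<m. 1/(y^(Suc m-j)*x^(j+2)))"
    by (auto simp: sum_distrib_left Suc_diff_le intro!: sum.cong)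
  also have "(1/y) * (1/(y^(Suc m)*x)) + (1/y)*(1/(y^(Suc m)*(y-x))) = - (1/(y^(Suc m)*x*(x-y)))"
  proof -
    have e: "x - y = -(y - x)" by simp
    have gen: "(1/y) * (1/(a*x)) + (1/y)*(1/(a*u)) = (1/a) * (1/(y*x) + 1/(y*u))" for a u :: real
      by (simp add: algebra_simps)
    have "(1/y) * (1/(y^(Suc m)*x)) + (1/y)*(1/(y^(Suc m)*(y-x))) = (1/y^(Suc m)) * (1/(y*x) + 1/(y*(y-x)))"
      by (rule gen)
    also have "1/(y*x) + 1/(y*(y-x)) = 1/(x*(y-x))"
    proof -
      have "1/(y*x) + 1/(y*(y-x)) = ((y-x) + x)/(y*x*(y-x))" using assms w by (simp add: field_simps)
      also have "(y-x) + x = y" by simp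
      also have "y/(y*x*(y-x)) = 1/(x*(y-x))" using assms w by simp
      finally show ?thesis .
    qed
    also have "(1/y^(Suc m)) * (1/(x*(y-x))) = - (1/(y^(Suc m)*x*(x-y)))"
    proof -
      have gen2: "1/(a*(x*u)) = - (1/(a*x*(-u)))" for a u :: real by simp
      show ?thesis using gen2[of "y^Suc m" "y-x"] by (simp add: mult.assoc)
    qed
    finally show ?thesis .
  qed
  ultimately show ?thesis by simp
qed


definition Off :: "nat \<Rightarrow> nat \<Rightarrow> nat \<times> nat \<Rightarrow> real" where
  "Off n j p = (if fst p = snd p then 0 else 1/(od (snd p)^(n-j) * od (fst p)^(j+2)))"

lemma diag_has_sum:
  assumes "N \<ge> 2"
  shows "((\<lambda>p. if fst p = snd p then 1/od (fst p)^N else 0) has_sum L N) UNIV"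
proof -
  have inj: "inj (\<lambda>k::nat. (k,k))" by (auto simp: inj_on_def)
  have "((\<lambda>p. 1/od (fst p)^N) has_sum L N) (range (\<lambda>k. (k,k)))"
    using has_sum_reindex[OF inj, of "\<lambda>p. 1/od (fst p)^N" "L N"] L_has_sum[OF assms]
    by (simp add: o_def)
  then show ?thesis
    by (rule has_sum_cong_neutral[THEN iffD1, rotated -1]) auto
qed

lemma Off_has_sum:
  assumes "j + 2 \<le> n"
  shows "(Off n j has_sum (L(j+2)*L(n-j) - L(n+2))) UNIV"
proof -
  have full: "((\<lambda>(k,l). 1/od k^(j+2) * (1/od l^(n-j))) has_sum L(j+2)*L(n-j)) UNIV"
    by (rule has_sum_prod_nonneg[OF L_has_sum L_has_sum]) (use assms in auto)
  have "((\<lambda>p. (\<lambda>(k,l). 1/od k^(j+2) * (1/od l^(n-j))) p - (if fst p = snd p then 1/od (fst p)^(n+2) else 0))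
      has_sum (L(j+2)*L(n-j) - L(n+2))) UNIV"
    by (rule has_sum_diff'[OF full diag_has_sum]) simp
  moreover have "(\<lambda>(k,l). 1/od k^(j+2) * (1/od l^(n-j))) p - (if fst p = snd p then 1/od (fst p)^(n+2) else 0) = Off n j p" for p
  proof (cases "fst p = snd p")
    case True
    have "od (fst p)^(j+2) * od (fst p)^(n-j) = od (fst p)^(n+2)"
      unfolding power_add[symmetric] using assms by simp
    then show ?thesis using True unfolding Off_def by (cases p) (simp add: field_simps)
  next
    case False
    then show ?thesis unfolding Off_def by (cases p) (simp add: mult.commute)
  qed
  ultimately show ?thesis by simp
qed

lemma Qf_decomp: "Qf (Suc m) p = (\<Sum>j<m. Off (Suc m) j p) - Qf (Suc m) (snd p, fst p)"
proof (cases "fst p = snd p")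
  case True
  then show ?thesis by (simp add: Qf_def Off_def)
next
  case False
  have ne: "od (fst p) \<noteq> od (snd p)" using False by (simp add: od_def)
  show ?thesis using False Q_decomp_real[OF od_nz od_nz ne, of m]
    by (simp add: Qf_def Off_def)
qed

lemma S_val:
  assumes "m \<ge> 2"
  shows "infsum (Qf (Suc m)) UNIV = (\<Sum>j<m. L(j+2)*L(Suc m-j) - L(Suc m+2)) / 2"
proof -
  define Sv where "Sv = infsum (Qf (Suc m)) UNIV"
  have hQ: "(Qf (Suc m) has_sum Sv) UNIV" unfolding Sv_def using Qf_summable[of "Suc m"] assms by auto
  have hsw: "((\<lambda>p. Qf (Suc m) (snd p, fst p)) has_sum Sv) UNIV"
  proof -
    have "(Qf (Suc m) has_sum Sv) (UNIV \<times> UNIV)" using hQ by simp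
    from has_sum_swap[THEN iffD1, OF this] have "((\<lambda>(x, y). Qf (Suc m) (y, x)) has_sum Sv) UNIV" by simp
    moreover have "(\<lambda>(x, y). Qf (Suc m) (y, x)) = (\<lambda>p. Qf (Suc m) (snd p, fst p))" by auto
    ultimately show ?thesis by simp
  qed
  have hOff: "((\<lambda>p. \<Sum>j<m. Off (Suc m) j p) has_sum (\<Sum>j<m. L(j+2)*L(Suc m-j) - L(Suc m+2))) UNIV"
    by (rule has_sum_sum') (rule Off_has_sum, simp)
  have "((\<lambda>p. (\<Sum>j<m. Off (Suc m) j p) - Qf (Suc m) (snd p, fst p)) has_sum
        ((\<Sum>j<m. L(j+2)*L(Suc m-j) - L(Suc m+2)) - Sv)) UNIV"
    by (rule has_sum_diff'[OF hOff hsw])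
  then have "(Qf (Suc m) has_sum ((\<Sum>j<m. L(j+2)*L(Suc m-j) - L(Suc m+2)) - Sv)) UNIV"
    unfolding Qf_decomp[symmetric] .
  then have "Sv = (\<Sum>j<m. L(j+2)*L(Suc m-j) - L(Suc m+2)) - Sv" using hQ has_sum_unique by blast
  then show ?thesis unfolding Sv_def by linarith
qed


lemma has_sum_sum_fin:
  fixes f :: "nat \<Rightarrow> 'a \<Rightarrow> real"
  assumes "finite J" "\<And>j. j \<in> J \<Longrightarrow> (f j has_sum s j) A"
  shows "((\<lambda>x. \<Sum>j\<in>J. f j x) has_sum (\<Sum>j\<in>J. s j)) A"
  using assms
proof (induction J rule: finite_induct)
  case empty
  then show ?case by simp
next
  case (insert j J)
  have "((\<lambda>x. f j x + (\<Sum>j\<in>J. f j x)) has_sum (s j + (\<Sum>j\<in>J. s j))) A"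
    by (rule has_sum_add) (use insert in auto)
  then show ?case using insert by simp
qed

lemma sig2:
  assumes "p \<ge> 2" "q \<ge> 2"
  shows "((\<lambda>(k,l). 1/(od k^p * (od k + od l)^q)) has_sum sigmaOdd q p / 2^q) UNIV"
proof -
  have "((\<lambda>x. (1/2^q) * (\<lambda>(k,l). 1/(od k^p * (real (k+l)+1)^q)) x) has_sum (1/2^q) * sigmaOdd q p) UNIV"
    by (rule has_sum_cmult_right[OF sigma_has_sum]) (use assms in auto)
  moreover have "(\<lambda>x. (1/2^q) * (\<lambda>(k,l). 1/(od k^p * (real (k+l)+1)^q)) x) = (\<lambda>(k,l). 1/(od k^p * (od k + od l)^q))"
  proof (rule ext, clarify)
    fix k l
    have e: "od k + od l = 2 * (real (k+l)+1)" by (simp add: od_def)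
    show "(1/2^q) * (1/(od k^p * (real (k+l)+1)^q)) = 1/(od k^p * (od k + od l)^q)"
      by (simp only: e power_mult_distrib) simp
  qed
  ultimately show ?thesis by simp
qed

lemma prod2:
  assumes "a \<ge> 2" "b \<ge> 2"
  shows "((\<lambda>(k,l). c / (od k^a * od l^b)) has_sum c * (L a * L b)) UNIV"
proof -
  have "((\<lambda>x. c * (\<lambda>(k,l). 1/od k^a * (1/od l^b)) x) has_sum c * (L a * L b)) UNIV"
    by (rule has_sum_cmult_right, rule has_sum_prod_nonneg[OF L_has_sum L_has_sum]) (use assms in auto)
  moreover have "(\<lambda>x. c * (\<lambda>(k,l). 1/od k^a * (1/od l^b)) x) = (\<lambda>(k,l). c / (od k^a * od l^b))"
    by auto
  ultimately show ?thesis by simp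
qed

lemma Fv_val:
  assumes "m \<ge> 2"
  shows "infsum (Ff (Suc m)) UNIV = L (m+3) - (\<Sum>j<m. L(j+2)*L(Suc m-j) - L(m+3)) / 2"
  using FQ_sum[of "Suc m"] S_val[OF assms] assms by (simp add: eval_nat_numeral)

lemma shift1: "(\<Sum>j=1..M. g j) = (\<Sum>q<M. (g (Suc q)::real))"
  by (induction M) auto

lemma pair_sum: "(\<Sum>j<2*M. f j) = (\<Sum>q<M. f (2*q) + (f (2*q+1)::real))" for M :: nat
  by (induction M) (simp_all add: eval_nat_numeral)

lemma parity_sum:
  fixes M :: nat
  shows "(\<Sum>j<2*M. L(j+2)*L(2*M+1-j)) = 2 * (\<Sum>j=1..M. L(2*j)*L(2*M+3-2*j))"
proof -
  define f where "f j = L(j+2)*L(2*M+1-j)" for j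
  have "(\<Sum>j<2*M. L(j+2)*L(2*M+1-j)) = (\<Sum>q<M. f (2*q)) + (\<Sum>q<M. f (2*q+1))"
    unfolding f_def pair_sum sum.distrib ..
  also have "(\<Sum>q<M. f (2*q+1)) = (\<Sum>q<M. f (2*(M - Suc q)+1))"
    by (rule sum.nat_diff_reindex[symmetric])
  also have "\<dots> = (\<Sum>q<M. f (2*q))"
  proof (rule sum.cong[OF refl])
    fix q assume q: "q \<in> {..<M}"
    then have "2*(M - Suc q)+1+2 = 2*M+1-2*q" "2*M+1-(2*(M - Suc q)+1) = 2*q+2" by auto
    then show "f (2*(M - Suc q)+1) = f (2*q)" unfolding f_def by (simp add: mult.commute)
  qed
  also have "(\<Sum>q<M. f (2*q)) = (\<Sum>j=1..M. L(2*j)*L(2*M+3-2*j))"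
  proof -
    have "(\<Sum>j=1..M. L(2*j)*L(2*M+3-2*j)) = (\<Sum>q<M. L(2*Suc q)*L(2*M+3-2*Suc q))"
      by (rule shift1)
    also have "\<dots> = (\<Sum>q<M. f (2*q))"
      by (rule sum.cong[OF refl]) (auto simp: f_def)
    finally show ?thesis by simp
  qed
  finally show ?thesis by simp
qed


lemma split_first_last:
  assumes "c \<ge> 1"
  shows "(\<Sum>i<Suc c. g i) = g 0 + (\<Sum>i\<in>{1..<c}. g i) + (g c :: real)"
proof -
  have "(\<Sum>i<Suc c. g i) = (\<Sum>i<c. g i) + g c" by simp
  also have "(\<Sum>i<c. g i) = (\<Sum>i\<in>{0..<c}. g i)" by (simp add: atLeast0LessThan)
  also have "\<dots> = g 0 + (\<Sum>i\<in>{Suc 0..<c}. g i)" using assms by (subst sum.atLeast_Suc_lessThan) auto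
  finally show ?thesis by simp
qed

lemma aux_last:
  fixes a x y z cb :: real
  assumes "a \<noteq> 0" "x \<noteq> 0" "y \<noteq> 0" "z \<noteq> 0" "z = x + y"
  shows "cb/(x*a*z) - cb/(x*a*y) = - (cb/(a*y*z))"
proof -
  have "cb/(x*a*z) - cb/(x*a*y) = cb*(y - z)/(x*a*y*z)" using assms(1-4) by (simp add: field_simps)
  also have "y - z = - x" using assms(5) by simp
  also have "cb*(-x)/(x*a*y*z) = - (cb/(a*y*z))" using assms(1-4) by simp
  finally show ?thesis .
qed

lemma point:
  fixes x y :: real and v r :: nat
  assumes x: "x > 0" and y: "y > 0" and v: "v \<ge> 1" and r: "r \<ge> 1"
  shows "1/(y^(2*r) * (x+y)^(2* v+1)) - 1/(x^(2*r)*(x+y)^(2* v+1))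
    = (\<Sum>i\<in>{1..<2* v}. real((2*r+i-1) choose i)/(x^(2*r+i)*(x+y)^(2* v+1-i)))
    + (\<Sum>u<2*r-1. (-1)^u * real((2* v+u) choose u)/(x^(2* v+1+u)*y^(2*r-u)))
    - real((2*r+2* v-1) choose (2* v)) / (x^(2*r+2* v-1)*y*(x+y))"
proof -
  define z where "z = x + y"
  have z: "z > 0" using x y unfolding z_def by simp
  define cb where "cb = real((2*r+2* v-1) choose (2* v))"
  define M1 where "M1 = (\<Sum>i\<in>{1..<2* v}. real((2*r+i-1) choose i)/(x^(2*r+i)*z^(2* v+1-i)))"
  define M2 where "M2 = (\<Sum>u<2*r-1. (-1)^u * real((2* v+u) choose u)/(x^(2* v+1+u)*y^(2*r-u)))"
  have pf: "1/(y^(2*r) * z^(Suc (2* v))) = (-1)^(2*r) * T1 x z (2*r) (Suc (2* v)) + T2 x y (2*r) (Suc (2* v))"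
    unfolding z_def by (rule pf_gen[OF x y])
  have t1: "T1 x z (2*r) (Suc (2* v)) = 1/(x^(2*r)*z^(2* v+1)) + M1 + cb/(x*x^(2*r+2* v-1)*z)"
  proof -
    have "T1 x z (2*r) (Suc (2* v)) = (\<Sum>i<Suc (2* v). real ((2*r+i-1) choose i) / (x^(2*r+i) * z^(Suc (2* v)-i)))"
      unfolding T1_def ..
    also have "\<dots> = real ((2*r+0-1) choose 0) / (x^(2*r+0) * z^(Suc (2* v)-0))
        + (\<Sum>i\<in>{1..<2* v}. real ((2*r+i-1) choose i) / (x^(2*r+i) * z^(Suc (2* v)-i)))
        + real ((2*r+2* v-1) choose (2* v)) / (x^(2*r+2* v) * z^(Suc (2* v)-2* v))"
      by (rule split_first_last) (use v in simp)
    also have "(\<Sum>i\<in>{1..<2* v}. real ((2*r+i-1) choose i) / (x^(2*r+i) * z^(Suc (2* v)-i))) = M1"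
      unfolding M1_def by (rule sum.cong) auto
    also have "x^(2*r+2* v) = x*x^(2*r+2* v-1)" using r by (simp add: power_Suc[symmetric] del: power_Suc)
    finally show ?thesis unfolding cb_def by simp
  qed
  have t2: "T2 x y (2*r) (Suc (2* v)) = M2 - cb/(x*x^(2*r+2* v-1)*y)"
  proof -
    obtain rr where rr: "2*r = Suc rr" using r by (cases "2*r") auto
    have "T2 x y (2*r) (Suc (2* v)) = (\<Sum>u<Suc rr. (-1)^u * real ((Suc (2* v)-1+u) choose u) / (x^(Suc (2* v)+u) * y^(Suc rr-u)))"
      unfolding T2_def rr ..
    also have "\<dots> = (\<Sum>u<rr. (-1)^u * real ((Suc (2* v)-1+u) choose u) / (x^(Suc (2* v)+u) * y^(Suc rr-u)))
       + (-1)^rr * real ((Suc (2* v)-1+rr) choose rr) / (x^(Suc (2* v)+rr) * y^(Suc rr-rr))"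
      by simp
    also have "(\<Sum>u<rr. (-1)^u * real ((Suc (2* v)-1+u) choose u) / (x^(Suc (2* v)+u) * y^(Suc rr-u))) = M2"
      unfolding M2_def using rr by (intro sum.cong) auto
    also have "(-1)^rr = (-1::real)" using rr by (metis even_Suc even_mult_iff even_numeral neg_one_odd_power)
    also have "(Suc (2* v)-1+rr) choose rr = (2*r+2* v-1) choose (2* v)"
    proof -
      have "(Suc (2* v)-1+rr) = 2*r+2* v-1" using rr by simp
      moreover have "((2*r+2* v-1) choose rr) = ((2*r+2* v-1) choose (2* v))"
        using binomial_symmetric[of rr "2*r+2* v-1"] rr by simp
      ultimately show ?thesis by simp
    qed
    also have "x^(Suc (2* v)+rr) = x*x^(2*r+2* v-1)" using rr by (simp add: algebra_simps)
    finally show ?thesis unfolding cb_def by simp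
  qed
  have last: "cb/(x*x^(2*r+2* v-1)*z) - cb/(x*x^(2*r+2* v-1)*y) = - (cb/(x^(2*r+2* v-1)*y*z))"
    by (rule aux_last) (use x y z in \<open>auto simp: z_def\<close>)
  have "1/(y^(2*r) * z^(2* v+1)) - 1/(x^(2*r)*z^(2* v+1)) = M1 + M2 - cb/(x^(2*r+2* v-1)*y*z)"
    using pf t1 t2 last by simp
  then show ?thesis unfolding z_def M1_def M2_def cb_def by simp
qed


lemma sig2c:
  assumes "p \<ge> 2" "q \<ge> 2"
  shows "((\<lambda>(k,l). c/(od k^p * (od k + od l)^q)) has_sum c * (sigmaOdd q p / 2^q)) UNIV"
proof -
  have "((\<lambda>x. c * (\<lambda>(k,l). 1/(od k^p * (od k + od l)^q)) x) has_sum c * (sigmaOdd q p / 2^q)) UNIV"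
    by (rule has_sum_cmult_right[OF sig2[OF assms]])
  moreover have "(\<lambda>x. c * (\<lambda>(k,l). 1/(od k^p * (od k + od l)^q)) x) = (\<lambda>(k,l). c/(od k^p * (od k + od l)^q))"
    by auto
  ultimately show ?thesis by simp
qed

lemma main_zero:
  fixes v r :: nat
  assumes v: "v \<ge> 1" and r: "r \<ge> 1"
  shows "(\<Sum>i\<in>{1..<2* v}. real((2* r+i-1) choose i) * (sigmaOdd (2* v+1-i) (2* r+i) / 2^(2* v+1-i)))
    + (\<Sum>u<2* r-1. (-1)^u * real((2* v+u) choose u) * (L (2* v+1+u) * L (2* r-u)))
    - real((2* r+2* v-1) choose (2* v)) * infsum (Ff (2* r+2* v-1)) UNIV = 0"
proof -
  define n where "n = 2* r+2* v-1"
  define cb where "cb = real((2* r+2* v-1) choose (2* v))"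
  define P0 where "P0 = (\<lambda>(k,l). 1/(od k^(2* r) * (od k + od l)^(2* v+1)))"
  have hP0: "(P0 has_sum sigmaOdd (2* v+1) (2* r) / 2^(2* v+1)) UNIV"
    unfolding P0_def by (rule sig2) (use v r in auto)
  have hP1: "((\<lambda>p. P0 (snd p, fst p)) has_sum sigmaOdd (2* v+1) (2* r) / 2^(2* v+1)) UNIV"
  proof -
    have "(P0 has_sum sigmaOdd (2* v+1) (2* r) / 2^(2* v+1)) (UNIV \<times> UNIV)" using hP0 by simp
    from has_sum_swap[THEN iffD1, OF this] have "((\<lambda>(x, y). P0 (y, x)) has_sum sigmaOdd (2* v+1) (2* r) / 2^(2* v+1)) UNIV" by simp
    moreover have "(\<lambda>(x, y). P0 (y, x)) = (\<lambda>p. P0 (snd p, fst p))" by auto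
    ultimately show ?thesis by simp
  qed
  have hD: "((\<lambda>p. P0 (snd p, fst p) - P0 p) has_sum 0) UNIV"
    using has_sum_diff'[OF hP1 hP0] by simp
  define M1f where "M1f = (\<lambda>i (k,l). real((2* r+i-1) choose i)/(od k^(2* r+i)*(od k + od l)^(2* v+1-i)))"
  define M2f where "M2f = (\<lambda>u (k,l). (-1)^u * real((2* v+u) choose u)/(od k^(2* v+1+u)* od l^(2* r-u)))"
  define Fc where "Fc = (\<lambda>(k,l). cb / (od k^n * od l * (od k + od l)))"
  have hM1: "((\<lambda>p. \<Sum>i\<in>{1..<2* v}. M1f i p) has_sum
      (\<Sum>i\<in>{1..<2* v}. real((2* r+i-1) choose i) * (sigmaOdd (2* v+1-i) (2* r+i) / 2^(2* v+1-i)))) UNIV"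
  proof (rule has_sum_sum_fin)
    fix i assume i: "i \<in> {1..<2* v}"
    show "(M1f i has_sum real((2* r+i-1) choose i) * (sigmaOdd (2* v+1-i) (2* r+i) / 2^(2* v+1-i))) UNIV"
      unfolding M1f_def by (rule sig2c) (use i r in auto)
  qed simp
  have hM2: "((\<lambda>p. \<Sum>u<2* r-1. M2f u p) has_sum
      (\<Sum>u<2* r-1. (-1)^u * real((2* v+u) choose u) * (L (2* v+1+u) * L (2* r-u)))) UNIV"
  proof (rule has_sum_sum_fin)
    fix u assume u: "u \<in> {..<2* r-1}"
    show "(M2f u has_sum (-1)^u * real((2* v+u) choose u) * (L (2* v+1+u) * L (2* r-u))) UNIV"
      unfolding M2f_def by (rule prod2) (use u v in auto)
  qed simp
  have hF: "(Fc has_sum cb * infsum (Ff n) UNIV) UNIV"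
  proof -
    have n3: "n \<ge> 3" unfolding n_def using v r by simp
    have "((\<lambda>p. cb * Ff n p) has_sum cb * infsum (Ff n) UNIV) UNIV"
      by (rule has_sum_cmult_right) (use Ff_summable n3 in auto)
    moreover have "(\<lambda>p. cb * Ff n p) = Fc" unfolding Fc_def Ff_def by auto
    ultimately show ?thesis by simp
  qed
  have hR: "((\<lambda>p. (\<Sum>i\<in>{1..<2* v}. M1f i p) + (\<Sum>u<2* r-1. M2f u p) - Fc p) has_sum
     ((\<Sum>i\<in>{1..<2* v}. real((2* r+i-1) choose i) * (sigmaOdd (2* v+1-i) (2* r+i) / 2^(2* v+1-i)))
    + (\<Sum>u<2* r-1. (-1)^u * real((2* v+u) choose u) * (L (2* v+1+u) * L (2* r-u)))
    - cb * infsum (Ff n) UNIV)) UNIV"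
    by (rule has_sum_diff'[OF has_sum_add[OF hM1 hM2] hF])
  have pt: "P0 (snd p, fst p) - P0 p = (\<Sum>i\<in>{1..<2* v}. M1f i p) + (\<Sum>u<2* r-1. M2f u p) - Fc p" for p
  proof (cases p)
    case (Pair k l)
    have "P0 (snd p, fst p) - P0 p = 1/(od l^(2* r) * (od k + od l)^(2* v+1)) - 1/(od k^(2* r)*(od k + od l)^(2* v+1))"
      unfolding P0_def Pair by (simp add: add.commute)
    also have "\<dots> = (\<Sum>i\<in>{1..<2* v}. real((2* r+i-1) choose i)/(od k^(2* r+i)*(od k + od l)^(2* v+1-i)))
      + (\<Sum>u<2* r-1. (-1)^u * real((2* v+u) choose u)/(od k^(2* v+1+u)* od l^(2* r-u)))
      - real((2* r+2* v-1) choose (2* v)) / (od k^(2* r+2* v-1)* od l*(od k + od l))"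
      by (rule point[OF od_pos od_pos v r])
    finally show ?thesis unfolding Pair M1f_def M2f_def Fc_def cb_def n_def by simp
  qed
  have "((\<lambda>p. P0 (snd p, fst p) - P0 p) has_sum
     ((\<Sum>i\<in>{1..<2* v}. real((2* r+i-1) choose i) * (sigmaOdd (2* v+1-i) (2* r+i) / 2^(2* v+1-i)))
    + (\<Sum>u<2* r-1. (-1)^u * real((2* v+u) choose u) * (L (2* v+1+u) * L (2* r-u)))
    - cb * infsum (Ff n) UNIV)) UNIV"
    unfolding pt by (rule hR)
  with hD have "0 = (\<Sum>i\<in>{1..<2* v}. real((2* r+i-1) choose i) * (sigmaOdd (2* v+1-i) (2* r+i) / 2^(2* v+1-i)))
    + (\<Sum>u<2* r-1. (-1)^u * real((2* v+u) choose u) * (L (2* v+1+u) * L (2* r-u)))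
    - cb * infsum (Ff n) UNIV" using has_sum_unique by blast
  then show ?thesis unfolding cb_def n_def by simp
qed


theorem mainTheorem13:
  fixes v r :: nat
  assumes "v \<ge> 1" and "r \<ge> 1"
  shows "(\<Sum>i=1..2* v-1. (2::real)^(i-1) * real ((2* r+i-1) choose i) * sigmaOdd (2* v+1-i) (2* r+i))
    + 2^(2* v) * (\<Sum>j=0..2* r-2. (-1)^j * real ((2* v+j) choose j)
         * lambdaDir (real (2* v+1+j)) * lambdaDir (real (2* r-j)))
    - 2^(2* v) * real ((2* v+2* r-1) choose (2* v)) * real (v+r) * lambdaDir (real (2* v+2* r+1))
    + 2^(2* v) * real ((2* v+2* r-1) choose (2* v))
       * (\<Sum>j=1..r+v-1. lambdaDir (real (2*j)) * lambdaDir (real (2* r+2* v-2*j+1))) = 0"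
proof -
  note v = assms(1) and r = assms(2)
  define M where "M = r + v - 1"
  define S' where "S' = (\<Sum>j=1..M. L(2*j)*L(2*M+3-2*j))"
  define X1 where "X1 = (\<Sum>i\<in>{1..<2* v}. real((2* r+i-1) choose i) * (sigmaOdd (2* v+1-i) (2* r+i) / 2^(2* v+1-i)))"
  define X2 where "X2 = (\<Sum>u<2* r-1. (-1)^u * real((2* v+u) choose u) * (L (2* v+1+u) * L (2* r-u)))"
  define cb where "cb = real((2* r+2* v-1) choose (2* v))"
  have Z: "X1 + X2 - cb * infsum (Ff (2* r+2* v-1)) UNIV = 0"
    unfolding X1_def X2_def cb_def by (rule main_zero[OF v r])
  have eqA: "(\<Sum>i=1..2* v-1. (2::real)^(i-1) * real ((2* r+i-1) choose i) * sigmaOdd (2* v+1-i) (2* r+i)) = 2^(2* v) * X1"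
  proof -
    have set: "{1..2* v-1} = {1..<2* v}" using v by auto
    show ?thesis unfolding set X1_def sum_distrib_left
    proof (rule sum.cong[OF refl])
      fix i assume i: "i \<in> {1..<2* v}"
      have "(2::real)^(2* v) = 2^(i-1) * 2^(2* v+1-i)"
        unfolding power_add[symmetric] using i by simp
      then show "(2::real)^(i-1) * real ((2* r+i-1) choose i) * sigmaOdd (2* v+1-i) (2* r+i)
          = 2^(2* v) * (real((2* r+i-1) choose i) * (sigmaOdd (2* v+1-i) (2* r+i) / 2^(2* v+1-i)))"
        by simp
    qed
  qed
  have eqB: "(\<Sum>j=0..2* r-2. (-1)^j * real ((2* v+j) choose j)
         * lambdaDir (real (2* v+1+j)) * lambdaDir (real (2* r-j))) = X2"
  proof -
    have set: "{0..2* r-2} = {..<2* r-1}" using r by auto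
    show ?thesis unfolding set X2_def lambdaDir_L by (rule sum.cong[OF refl]) (simp only: mult.assoc)
  qed
  have eqC: "lambdaDir (real (2* v+2* r+1)) = L (2*M+3)"
    unfolding lambdaDir_L M_def using v r by (simp add: algebra_simps)
  have eqD: "(\<Sum>j=1..r+v-1. lambdaDir (real (2*j)) * lambdaDir (real (2* r+2* v-2*j+1))) = S'"
    unfolding S'_def M_def
  proof (rule sum.cong[OF refl])
    fix j assume j: "j \<in> {1..r+v-1}"
    then have e: "2* r+2* v-2*j+1 = 2*(r+v-1)+3-2*j" using v r by auto
    show "lambdaDir (real (2*j)) * lambdaDir (real (2* r+2* v-2*j+1)) = L(2*j)*L(2*(r+v-1)+3-2*j)"
      unfolding lambdaDir_L e ..
  qed
  have eqF: "infsum (Ff (2* r+2* v-1)) UNIV = real (v+r) * L(2*M+3) - S'"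
  proof -
    have m2: "2*M \<ge> 2" unfolding M_def using v r by simp
    have e1: "Suc (2*M) = 2* r+2* v-1" unfolding M_def using v r by simp
    have "infsum (Ff (Suc (2*M))) UNIV = L (2*M+3) - (\<Sum>j<2*M. L(j+2)*L(Suc (2*M)-j) - L(2*M+3)) / 2"
      using Fv_val[OF m2] by simp
    also have "(\<Sum>j<2*M. L(j+2)*L(Suc (2*M)-j) - L(2*M+3)) = (\<Sum>j<2*M. L(j+2)*L(2*M+1-j)) - real (2*M) * L(2*M+3)"
      by (simp add: sum_subtractf)
    also have "(\<Sum>j<2*M. L(j+2)*L(2*M+1-j)) = 2 * S'" unfolding S'_def by (rule parity_sum)
    also have "real (2*M) = 2 * real M" by simp
    finally have h: "infsum (Ff (Suc (2*M))) UNIV = L (2*M+3) - (2 * S' - 2 * real M * L(2*M+3)) / 2" .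
    have h2: "(2 * S' - 2 * real M * L(2*M+3)) / 2 = S' - real M * L(2*M+3)" by simp
    have "infsum (Ff (Suc (2*M))) UNIV = (1 + real M) * L(2*M+3) - S'"
      unfolding h h2 by (simp add: algebra_simps)
    moreover have "1 + real M = real (v+r)" unfolding M_def using v r by simp
    ultimately show ?thesis unfolding e1 by simp
  qed
  have cbe: "real ((2* v+2* r-1) choose (2* v)) = cb" unfolding cb_def by (simp add: add.commute)
  have "X1 + X2 - cb * (real (v+r) * L(2*M+3) - S') = 0" using Z unfolding eqF .
  then have "2^(2* v) * (X1 + X2 - cb * (real (v+r) * L(2*M+3) - S')) = (0::real)" by simp
  then show ?thesis unfolding eqA eqB eqC eqD cbe by (simp add: algebra_simps)
qed


end
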